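(* There is a one-to-one correspondence between skeletal $2$-term homotopy Nijenhuis algebras and triples consisting of a Nijenhuis algebra $((A,\cdot),N)$, a Nijenhuis bimodule $((M,\triangleright,\triangleleft),N_M)$ over it, and a $3$-cocycle $(\chi,F)\in Z^3_{\mathrm{NAlg}}((A,N);(M,N_M))$. Explicitly, a skeletal $2$-term homotopy Nijenhuis algebra $((\mathcal{A}_1\xrightarrow{0}\mathcal{A}_0,\mu_2,\mu_3),(\mathcal{N}_0,\mathcal{N}_1,\mathcal{N}_2))$ corresponds to $A=\mathcal{A}_0$ with $a\cdot b=\mu_2(a,b)$, $N=\mathcal{N}_0$, $M=\mathcal{A}_1$ with $a\triangleright u=\mu_2(a,u)$, $u\triangleleft a=\mu_2(u,a)$, $N_M=\mathcal{N}_1$, and $(\chi,F)=(\mu_3,\mathcal{N}_2)$.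
   Context: Over a field of characteristic $0$. A 2-term $A_\infty$-algebra $(\mathcal{A}_1\xrightarrow{\partial}\mathcal{A}_0,\mu_2,\mu_3)$: linear $\partial$, bilinear $\mu_2:\mathcal{A}_i\times\mathcal{A}_j\to\mathcal{A}_{i+j}$ ($0\le i,j,i+j\le1$), trilinear $\mu_3:\mathcal{A}_0^{\times3}\to\mathcal{A}_1$, with, for $a,b,c,d\in\mathcal{A}_0$, $u,v\in\mathcal{A}_1$: $\partial\mu_2(a,u)=\mu_2(a,\partial u)$; $\partial\mu_2(u,a)=\mu_2(\partial u,a)$; $\mu_2(\partial u,v)=\mu_2(u,\partial v)$; $\partial\mu_3(a,b,c)=\mu_2(\mu_2(a,b),c)-\mu_2(a,\mu_2(b,c))$; $\mu_3(a,b,\partial u)=\mu_2(\mu_2(a,b),u)-\mu_2(a,\mu_2(b,u))$; $\mu_3(a,\partial u,b)=\mu_2(\mu_2(a,u),b)-\mu_2(a,\mu_2(u,b))$; $\mu_3(\partial u,a,b)=\mu_2(\mu_2(u,a),b)-\mu_2(u,\mu_2(a,b))$; $\mu_2(a,\mu_3(b,c,d))-\mu_3(\mu_2(a,b),c,d)+\mu_3(a,\mu_2(b,c),d)-\mu_3(a,b,\mu_2(c,d))+\mu_2(\mu_3(a,b,c),d)=0$. Write $ab=\mu_2(a,b)$ etc. A homotopy Nijenhuis operator is $(\mathcal{N}_0:\mathcal{A}_0\to\mathcal{A}_0,\mathcal{N}_1:\mathcal{A}_1\to\mathcal{A}_1,\mathcal{N}_2:\mathcal{A}_0\times\mathcal{A}_0\to\mathcal{A}_1)$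 with: $\partial\mathcal{N}_1=\mathcal{N}_0\partial$; $\mathcal{N}_0(\mathcal{N}_0(a)b+a\mathcal{N}_0(b)-\mathcal{N}_0(ab))-\mathcal{N}_0(a)\mathcal{N}_0(b)=\partial\mathcal{N}_2(a,b)$; $\mathcal{N}_1(\mathcal{N}_0(a)u+a\mathcal{N}_1(u)-\mathcal{N}_1(au))-\mathcal{N}_0(a)\mathcal{N}_1(u)=\mathcal{N}_2(a,\partial u)$; $\mathcal{N}_1(\mathcal{N}_1(u)a+u\mathcal{N}_0(a)-\mathcal{N}_1(ua))-\mathcal{N}_1(u)\mathcal{N}_0(a)=\mathcal{N}_2(\partial u,a)$; and, writing $a\cdot_{\mathcal{N}}b=\mathcal{N}_0(a)b+a\mathcal{N}_0(b)-\mathcal{N}_0(ab)$: $\mathcal{N}_0(a)\mathcal{N}_2(b,c)-\mathcal{N}_2(a,b)\mathcal{N}_0(c)-\mathcal{N}_2(a\cdot_{\mathcal{N}}b,c)+\mathcal{N}_2(a,b\cdot_{\mathcal{N}}c)-\mathcal{N}_1\big(a\mathcal{N}_2(b,c)-\mathcal{N}_2(ab,c)+\mathcal{N}_2(a,bc)-\mathcal{N}_2(a,b)c\big)=\mu_3(\mathcal{N}_0a,\mathcal{N}_0b,\mathcal{N}_0c)-\mathcal{N}_1\mu_3(\mathcal{N}_0a,\mathcal{N}_0b,c)-\mathcal{N}_1\mu_3(\mathcal{N}_0a,b,\mathcal{N}_0c)-\mathcal{N}_1\mu_3(a,\mathcal{N}_0b,\mathcal{N}_0c)+\mathcal{N}_1^2\mu_3(\mathcal{N}_0a,b,c)+\mathcal{N}_1^2\mu_3(a,\mathcal{N}_0b,c)+\mathcal{N}_1^2\mu_3(a,b,\mathcal{N}_0c)-\mathcal{N}_1^3\mu_3(a,b,c)$.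 A 2-term homotopy Nijenhuis algebra is such a pair; skeletal means $\partial=0$. Nijenhuis algebra: associative $(A,\cdot)$ with linear $N$, $N(a)N(b)=N(N(a)b+aN(b)-N(ab))$. Nijenhuis bimodule: $A$-bimodule with $N_M$ satisfying $N(a)\triangleright N_M(u)=N_M(N(a)\triangleright u+a\triangleright N_M(u)-N_M(a\triangleright u))$, $N_M(u)\triangleleft N(a)=N_M(N_M(u)\triangleleft a+u\triangleleft N(a)-N_M(u\triangleleft a))$. $C^3_{\mathrm{NAlg}}=\mathrm{Hom}(A^{\otimes3},M)\oplus\mathrm{Hom}(A^{\otimes2},M)$ and $(\chi,F)$ is a 3-cocycle iff $\delta_{\mathrm{Hoch}}\chi=0$ and $d_{N,N_M}F-\partial^{N,N_M}\chi=0$, where $(\delta_{\mathrm{Hoch}}f)(a_1,\dots,a_{n+1})=a_1\triangleright f(a_2,\dots)+\sum_{i=1}^n(-1)^if(\dots,a_ia_{i+1},\dots)+(-1)^{n+1}f(a_1,\dots,a_n)\triangleleft a_{n+1}$; $(d_{N,N_M}F)(a_1,\dots,a_{n+1})=N(a_1)\triangleright F(a_2,\dots,a_{n+1})-(-1)^nF(a_1,\dots,a_n)\triangleleft N(a_{n+1})+\sum_{i=1}^n(-1)^iF(a_1,\dots,a_{i-1},N(a_i)a_{i+1}+a_iN(a_{i+1})-N(a_ia_{i+1}),\dots,a_{n+1})-N_M((\delta_{\mathrm{Hoch}}F)(a_1,\dots,a_{n+1}))$; $\partial^{N,N_M}(f)(a_1,\dots,a_n)=\sum_{S\subseteq\{1..n\}}(-1)^{|S|}N_M^{|S|}(f(b_1,\dots,b_n))$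 with $b_i=a_i$ for $i\in S$, $b_i=N(a_i)$ otherwise. *)

theory Defs
  imports Complex_Main
begin

text \<open>Vector spaces over a field 'k are given by scalar multiplications
  (locale Vector_Spaces.vector_space); linear maps by Vector_Spaces.linear.\<close>

definition bilin ::
  "('k::field \<Rightarrow> 'a::ab_group_add \<Rightarrow> 'a) \<Rightarrow> ('k \<Rightarrow> 'b::ab_group_add \<Rightarrow> 'b) \<Rightarrow> ('k \<Rightarrow> 'c::ab_group_add \<Rightarrow> 'c)
    \<Rightarrow> ('a \<Rightarrow> 'b \<Rightarrow> 'c) \<Rightarrow> bool" where
  "bilin s1 s2 s3 f \<longleftrightarrow>
     (\<forall>x. Vector_Spaces.linear s2 s3 (f x)) \<and> (\<forall>y. Vector_Spaces.linear s1 s3 (\<lambda>x. f x y))"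

definition trilin ::
  "('k::field \<Rightarrow> 'a::ab_group_add \<Rightarrow> 'a) \<Rightarrow> ('k \<Rightarrow> 'c::ab_group_add \<Rightarrow> 'c)
    \<Rightarrow> ('a \<Rightarrow> 'a \<Rightarrow> 'a \<Rightarrow> 'c) \<Rightarrow> bool" where
  "trilin s1 s3 f \<longleftrightarrow>
     (\<forall>x y. Vector_Spaces.linear s1 s3 (f x y)) \<and>
     (\<forall>x z. Vector_Spaces.linear s1 s3 (\<lambda>y. f x y z)) \<and>
     (\<forall>y z. Vector_Spaces.linear s1 s3 (\<lambda>x. f x y z))"

text \<open>2-term A-infinity algebra (A1 --d--> A0, mu2, mu3). mu2 is split into its
  components m00 : A0 x A0 -> A0, m01 : A0 x A1 -> A1, m10 : A1 x A0 -> A1.\<close>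

definition two_term_Ainf ::
  "('k::field \<Rightarrow> 'a::ab_group_add \<Rightarrow> 'a) \<Rightarrow> ('k \<Rightarrow> 'm::ab_group_add \<Rightarrow> 'm) \<Rightarrow> ('m \<Rightarrow> 'a)
   \<Rightarrow> ('a \<Rightarrow> 'a \<Rightarrow> 'a) \<Rightarrow> ('a \<Rightarrow> 'm \<Rightarrow> 'm) \<Rightarrow> ('m \<Rightarrow> 'a \<Rightarrow> 'm) \<Rightarrow> ('a \<Rightarrow> 'a \<Rightarrow> 'a \<Rightarrow> 'm) \<Rightarrow> bool" where
  "two_term_Ainf sA sM d m00 m01 m10 m3 \<longleftrightarrow>
     Vector_Spaces.linear sM sA d \<and>
     bilin sA sA sA m00 \<and> bilin sA sM sM m01 \<and> bilin sM sA sM m10 \<and> trilin sA sM m3 \<and>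
     (\<forall>a u. d (m01 a u) = m00 a (d u)) \<and>
     (\<forall>u a. d (m10 u a) = m00 (d u) a) \<and>
     (\<forall>u v. m01 (d u) v = m10 u (d v)) \<and>
     (\<forall>a b c. d (m3 a b c) = m00 (m00 a b) c - m00 a (m00 b c)) \<and>
     (\<forall>a b u. m3 a b (d u) = m01 (m00 a b) u - m01 a (m01 b u)) \<and>
     (\<forall>a u b. m3 a (d u) b = m10 (m01 a u) b - m01 a (m10 u b)) \<and>
     (\<forall>u a b. m3 (d u) a b = m10 (m10 u a) b - m10 u (m00 a b)) \<and>
     (\<forall>a b c e. m01 a (m3 b c e) - m3 (m00 a b) c e + m3 a (m00 b c) e
                 - m3 a b (m00 c e) + m10 (m3 a b c) e = 0)"

definition nij_prod :: "('a \<Rightarrow> 'a \<Rightarrow> 'a::ab_group_add) \<Rightarrow> ('a \<Rightarrow> 'a) \<Rightarrow> 'a \<Rightarrow> 'a \<Rightarrow> 'a" where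
  "nij_prod m N a b = m (N a) b + m a (N b) - N (m a b)"

definition homotopy_Nijenhuis_op ::
  "('k::field \<Rightarrow> 'a::ab_group_add \<Rightarrow> 'a) \<Rightarrow> ('k \<Rightarrow> 'm::ab_group_add \<Rightarrow> 'm) \<Rightarrow> ('m \<Rightarrow> 'a)
   \<Rightarrow> ('a \<Rightarrow> 'a \<Rightarrow> 'a) \<Rightarrow> ('a \<Rightarrow> 'm \<Rightarrow> 'm) \<Rightarrow> ('m \<Rightarrow> 'a \<Rightarrow> 'm) \<Rightarrow> ('a \<Rightarrow> 'a \<Rightarrow> 'a \<Rightarrow> 'm)
   \<Rightarrow> ('a \<Rightarrow> 'a) \<Rightarrow> ('m \<Rightarrow> 'm) \<Rightarrow> ('a \<Rightarrow> 'a \<Rightarrow> 'm) \<Rightarrow> bool" where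
  "homotopy_Nijenhuis_op sA sM d m00 m01 m10 m3 N0 N1 N2 \<longleftrightarrow>
     Vector_Spaces.linear sA sA N0 \<and> Vector_Spaces.linear sM sM N1 \<and> bilin sA sA sM N2 \<and>
     (\<forall>u. d (N1 u) = N0 (d u)) \<and>
     (\<forall>a b. N0 (nij_prod m00 N0 a b) - m00 (N0 a) (N0 b) = d (N2 a b)) \<and>
     (\<forall>a u. N1 (m01 (N0 a) u + m01 a (N1 u) - N1 (m01 a u)) - m01 (N0 a) (N1 u) = N2 a (d u)) \<and>
     (\<forall>u a. N1 (m10 (N1 u) a + m10 u (N0 a) - N1 (m10 u a)) - m10 (N1 u) (N0 a) = N2 (d u) a) \<and>
     (\<forall>a b c.
        m01 (N0 a) (N2 b c) - m10 (N2 a b) (N0 c) - N2 (nij_prod m00 N0 a b) c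
        + N2 a (nij_prod m00 N0 b c)
        - N1 (m01 a (N2 b c) - N2 (m00 a b) c + N2 a (m00 b c) - m10 (N2 a b) c)
      = m3 (N0 a) (N0 b) (N0 c) - N1 (m3 (N0 a) (N0 b) c) - N1 (m3 (N0 a) b (N0 c))
        - N1 (m3 a (N0 b) (N0 c)) + (N1 ^^ 2) (m3 (N0 a) b c) + (N1 ^^ 2) (m3 a (N0 b) c)
        + (N1 ^^ 2) (m3 a b (N0 c)) - (N1 ^^ 3) (m3 a b c))"

definition skeletal_2term_hNA ::
  "('k::field \<Rightarrow> 'a::ab_group_add \<Rightarrow> 'a) \<Rightarrow> ('k \<Rightarrow> 'm::ab_group_add \<Rightarrow> 'm)
   \<Rightarrow> ('a \<Rightarrow> 'a \<Rightarrow> 'a) \<Rightarrow> ('a \<Rightarrow> 'm \<Rightarrow> 'm) \<Rightarrow> ('m \<Rightarrow> 'a \<Rightarrow> 'm) \<Rightarrow> ('a \<Rightarrow> 'a \<Rightarrow> 'a \<Rightarrow> 'm)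
   \<Rightarrow> ('a \<Rightarrow> 'a) \<Rightarrow> ('m \<Rightarrow> 'm) \<Rightarrow> ('a \<Rightarrow> 'a \<Rightarrow> 'm) \<Rightarrow> bool" where
  "skeletal_2term_hNA sA sM m00 m01 m10 m3 N0 N1 N2 \<longleftrightarrow>
     two_term_Ainf sA sM (\<lambda>_. 0) m00 m01 m10 m3 \<and>
     homotopy_Nijenhuis_op sA sM (\<lambda>_. 0) m00 m01 m10 m3 N0 N1 N2"

definition Nijenhuis_algebra ::
  "('k::field \<Rightarrow> 'a::ab_group_add \<Rightarrow> 'a) \<Rightarrow> ('a \<Rightarrow> 'a \<Rightarrow> 'a) \<Rightarrow> ('a \<Rightarrow> 'a) \<Rightarrow> bool" where
  "Nijenhuis_algebra sA m N \<longleftrightarrow>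
     bilin sA sA sA m \<and> (\<forall>a b c. m (m a b) c = m a (m b c)) \<and>
     Vector_Spaces.linear sA sA N \<and>
     (\<forall>a b. m (N a) (N b) = N (nij_prod m N a b))"

definition Nijenhuis_bimodule ::
  "('k::field \<Rightarrow> 'a::ab_group_add \<Rightarrow> 'a) \<Rightarrow> ('k \<Rightarrow> 'm::ab_group_add \<Rightarrow> 'm)
   \<Rightarrow> ('a \<Rightarrow> 'a \<Rightarrow> 'a) \<Rightarrow> ('a \<Rightarrow> 'a) \<Rightarrow> ('a \<Rightarrow> 'm \<Rightarrow> 'm) \<Rightarrow> ('m \<Rightarrow> 'a \<Rightarrow> 'm) \<Rightarrow> ('m \<Rightarrow> 'm) \<Rightarrow> bool" where
  "Nijenhuis_bimodule sA sM m N l r NM \<longleftrightarrow>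
     bilin sA sM sM l \<and> bilin sM sA sM r \<and>
     (\<forall>a b u. l (m a b) u = l a (l b u)) \<and>
     (\<forall>a u b. r (l a u) b = l a (r u b)) \<and>
     (\<forall>u a b. r (r u a) b = r u (m a b)) \<and>
     Vector_Spaces.linear sM sM NM \<and>
     (\<forall>a u. l (N a) (NM u) = NM (l (N a) u + l a (NM u) - NM (l a u))) \<and>
     (\<forall>u a. r (NM u) (N a) = NM (r (NM u) a + r u (N a) - NM (r u a)))"

definition hoch_delta2 ::
  "('a \<Rightarrow> 'a \<Rightarrow> 'a) \<Rightarrow> ('a \<Rightarrow> 'm \<Rightarrow> 'm) \<Rightarrow> ('m \<Rightarrow> 'a \<Rightarrow> 'm::ab_group_add) \<Rightarrow> ('a \<Rightarrow> 'a \<Rightarrow> 'm)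
   \<Rightarrow> 'a \<Rightarrow> 'a \<Rightarrow> 'a \<Rightarrow> 'm" where
  "hoch_delta2 m l r F a1 a2 a3 = l a1 (F a2 a3) - F (m a1 a2) a3 + F a1 (m a2 a3) - r (F a1 a2) a3"

definition hoch_delta3 ::
  "('a \<Rightarrow> 'a \<Rightarrow> 'a) \<Rightarrow> ('a \<Rightarrow> 'm \<Rightarrow> 'm) \<Rightarrow> ('m \<Rightarrow> 'a \<Rightarrow> 'm::ab_group_add) \<Rightarrow> ('a \<Rightarrow> 'a \<Rightarrow> 'a \<Rightarrow> 'm)
   \<Rightarrow> 'a \<Rightarrow> 'a \<Rightarrow> 'a \<Rightarrow> 'a \<Rightarrow> 'm" where
  "hoch_delta3 m l r f a1 a2 a3 a4 = l a1 (f a2 a3 a4) - f (m a1 a2) a3 a4 + f a1 (m a2 a3) a4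
     - f a1 a2 (m a3 a4) + r (f a1 a2 a3) a4"

definition d_NNM2 ::
  "('a \<Rightarrow> 'a \<Rightarrow> 'a::ab_group_add) \<Rightarrow> ('a \<Rightarrow> 'a) \<Rightarrow> ('a \<Rightarrow> 'm \<Rightarrow> 'm) \<Rightarrow> ('m \<Rightarrow> 'a \<Rightarrow> 'm::ab_group_add)
   \<Rightarrow> ('m \<Rightarrow> 'm) \<Rightarrow> ('a \<Rightarrow> 'a \<Rightarrow> 'm) \<Rightarrow> 'a \<Rightarrow> 'a \<Rightarrow> 'a \<Rightarrow> 'm" where
  "d_NNM2 m N l r NM F a1 a2 a3 =
     l (N a1) (F a2 a3) - r (F a1 a2) (N a3)
     - F (nij_prod m N a1 a2) a3 + F a1 (nij_prod m N a2 a3)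
     - NM (hoch_delta2 m l r F a1 a2 a3)"

definition partial_NNM3 ::
  "('a \<Rightarrow> 'a) \<Rightarrow> ('m \<Rightarrow> 'm::ab_group_add) \<Rightarrow> ('a \<Rightarrow> 'a \<Rightarrow> 'a \<Rightarrow> 'm) \<Rightarrow> 'a \<Rightarrow> 'a \<Rightarrow> 'a \<Rightarrow> 'm" where
  "partial_NNM3 N NM f a1 a2 a3 =
     (\<Sum>S\<in>Pow {1::nat, 2, 3}.
        (if even (card S) then id else uminus)
          ((NM ^^ card S)
            (f (if 1 \<in> S then a1 else N a1) (if 2 \<in> S then a2 else N a2) (if 3 \<in> S then a3 else N a3))))"

definition NAlg_3cocycle ::
  "('k::field \<Rightarrow> 'a::ab_group_add \<Rightarrow> 'a) \<Rightarrow> ('k \<Rightarrow> 'm::ab_group_add \<Rightarrow> 'm)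
   \<Rightarrow> ('a \<Rightarrow> 'a \<Rightarrow> 'a) \<Rightarrow> ('a \<Rightarrow> 'a) \<Rightarrow> ('a \<Rightarrow> 'm \<Rightarrow> 'm) \<Rightarrow> ('m \<Rightarrow> 'a \<Rightarrow> 'm) \<Rightarrow> ('m \<Rightarrow> 'm)
   \<Rightarrow> ('a \<Rightarrow> 'a \<Rightarrow> 'a \<Rightarrow> 'm) \<Rightarrow> ('a \<Rightarrow> 'a \<Rightarrow> 'm) \<Rightarrow> bool" where
  "NAlg_3cocycle sA sM m N l r NM chi F \<longleftrightarrow>
     trilin sA sM chi \<and> bilin sA sA sM F \<and>
     (\<forall>a1 a2 a3 a4. hoch_delta3 m l r chi a1 a2 a3 a4 = 0) \<and>
     (\<forall>a1 a2 a3. d_NNM2 m N l r NM F a1 a2 a3 - partial_NNM3 N NM chi a1 a2 a3 = 0)"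

end

theory Submission
  imports Defs
begin

lemma lin0: "Vector_Spaces.linear s1 s2 f \<Longrightarrow> f 0 = 0"
  using module_hom.zero[of s1 s2 f] linear_iff_module_hom by metis

lemma linzero:
  assumes "Vector_Spaces.vector_space s1" "Vector_Spaces.vector_space s2"
  shows "Vector_Spaces.linear s1 s2 (\<lambda>_. 0)"
  by (rule vector_space_pair.linear_zero) (simp add: vector_space_pair_def assms)

lemma bil0:
  assumes "bilin s1 s2 s3 f"
  shows "f x 0 = 0" "f 0 y = 0"
proof -
  show "f x 0 = 0" using assms unfolding bilin_def by (auto intro: lin0)
  have "Vector_Spaces.linear s1 s3 (\<lambda>x. f x y)" using assms unfolding bilin_def by auto
  from lin0[OF this] show "f 0 y = 0" by simp
qed

lemma tril0:
  assumes "trilin s1 s3 f"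
  shows "f x y 0 = 0" "f x 0 z = 0" "f 0 y z = 0"
proof -
  show "f x y 0 = 0" using assms unfolding trilin_def by (auto intro: lin0)
  have "Vector_Spaces.linear s1 s3 (\<lambda>y. f x y z)" using assms unfolding trilin_def by auto
  from lin0[OF this] show "f x 0 z = 0" by simp
  have "Vector_Spaces.linear s1 s3 (\<lambda>x. f x y z)" using assms unfolding trilin_def by auto
  from lin0[OF this] show "f 0 y z = 0" by simp
qed

lemma fp2: "(g ^^ 2) x = g (g x)" by (simp add: numeral_2_eq_2)
lemma fp3: "(g ^^ 3) x = g (g (g x))" by (simp add: numeral_3_eq_3)

lemma partial_expl:
  "partial_NNM3 N NM f a b c =
     f (N a) (N b) (N c) - NM (f (N a) (N b) c) - NM (f (N a) b (N c))
        - NM (f a (N b) (N c)) + (NM ^^ 2) (f (N a) b c) + (NM ^^ 2) (f a (N b) c)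
        + (NM ^^ 2) (f a b (N c)) - (NM ^^ 3) (f a b c)"
proof -
  have P: "Pow {1::nat,2,3} = {{},{1},{2},{3},{1,2},{1,3},{2,3},{1,2,3}}"
    by (auto simp: Pow_insert)
  show ?thesis
    unfolding partial_NNM3_def P
    by (simp add: doubleton_eq_iff insert_eq_iff algebra_simps fp2 fp3)
qed

lemma equiv:
  assumes vA: "Vector_Spaces.vector_space sA" and vM: "Vector_Spaces.vector_space sM"
  shows "skeletal_2term_hNA sA sM m00 m01 m10 m3 N0 N1 N2 \<longleftrightarrow>
    (Nijenhuis_algebra sA m00 N0 \<and> Nijenhuis_bimodule sA sM m00 N0 m01 m10 N1 \<and>
     NAlg_3cocycle sA sM m00 N0 m01 m10 N1 m3 N2)"
proof
  assume H: "skeletal_2term_hNA sA sM m00 m01 m10 m3 N0 N1 N2"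
  then have A: "two_term_Ainf sA sM (\<lambda>_. 0) m00 m01 m10 m3"
    and B: "homotopy_Nijenhuis_op sA sM (\<lambda>_. 0) m00 m01 m10 m3 N0 N1 N2"
    by (auto simp: skeletal_2term_hNA_def)
  from A have b00: "bilin sA sA sA m00" and b01: "bilin sA sM sM m01"
    and b10: "bilin sM sA sM m10" and t3: "trilin sA sM m3"
    by (auto simp: two_term_Ainf_def)
  from B have lN0: "Vector_Spaces.linear sA sA N0" and lN1: "Vector_Spaces.linear sM sM N1"
    and bN2: "bilin sA sA sM N2" by (auto simp: homotopy_Nijenhuis_op_def)
  note z = bil0[OF b00] bil0[OF b01] bil0[OF b10] tril0[OF t3] bil0[OF bN2]
  have as: "m00 (m00 a b) c = m00 a (m00 b c)" for a b c
    using A unfolding two_term_Ainf_def by (metis eq_iff_diff_eq_0)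
  have l1: "m01 (m00 a b) u = m01 a (m01 b u)" for a b u
    using A unfolding two_term_Ainf_def by (metis z eq_iff_diff_eq_0)
  have l2: "m10 (m01 a u) b = m01 a (m10 u b)" for a b u
    using A unfolding two_term_Ainf_def by (metis z eq_iff_diff_eq_0)
  have l3: "m10 (m10 u a) b = m10 u (m00 a b)" for a b u
    using A unfolding two_term_Ainf_def by (metis z eq_iff_diff_eq_0)
  have h3: "hoch_delta3 m00 m01 m10 m3 a b c e = 0" for a b c e
    using A unfolding two_term_Ainf_def hoch_delta3_def by metis
  have n0: "m00 (N0 a) (N0 b) = N0 (nij_prod m00 N0 a b)" for a b
    using B unfolding homotopy_Nijenhuis_op_def by (metis eq_iff_diff_eq_0)
  have n1: "m01 (N0 a) (N1 u) = N1 (m01 (N0 a) u + m01 a (N1 u) - N1 (m01 a u))" for a u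
    using B unfolding homotopy_Nijenhuis_op_def by (metis z eq_iff_diff_eq_0)
  have n2: "m10 (N1 u) (N0 a) = N1 (m10 (N1 u) a + m10 u (N0 a) - N1 (m10 u a))" for a u
    using B unfolding homotopy_Nijenhuis_op_def by (metis z eq_iff_diff_eq_0)
  have c: "d_NNM2 m00 N0 m01 m10 N1 N2 a b c - partial_NNM3 N0 N1 m3 a b c = 0" for a b c
    using B unfolding homotopy_Nijenhuis_op_def d_NNM2_def hoch_delta2_def partial_expl
    by (simp add: eq_iff_diff_eq_0[symmetric])
  show "Nijenhuis_algebra sA m00 N0 \<and> Nijenhuis_bimodule sA sM m00 N0 m01 m10 N1 \<and>
     NAlg_3cocycle sA sM m00 N0 m01 m10 N1 m3 N2"
    unfolding Nijenhuis_algebra_def Nijenhuis_bimodule_def NAlg_3cocycle_def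
    using b00 b01 b10 t3 lN0 lN1 bN2 as l1 l2 l3 h3 n0 n1 n2 c by blast
next
  assume H: "Nijenhuis_algebra sA m00 N0 \<and> Nijenhuis_bimodule sA sM m00 N0 m01 m10 N1 \<and>
     NAlg_3cocycle sA sM m00 N0 m01 m10 N1 m3 N2"
  then have b00: "bilin sA sA sA m00" and b01: "bilin sA sM sM m01"
    and b10: "bilin sM sA sM m10" and t3: "trilin sA sM m3"
    and lN0: "Vector_Spaces.linear sA sA N0" and lN1: "Vector_Spaces.linear sM sM N1"
    and bN2: "bilin sA sA sM N2"
    and as: "\<And>a b c. m00 (m00 a b) c = m00 a (m00 b c)"
    and l1: "\<And>a b u. m01 (m00 a b) u = m01 a (m01 b u)"
    and l2: "\<And>a b u. m10 (m01 a u) b = m01 a (m10 u b)"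
    and l3: "\<And>a b u. m10 (m10 u a) b = m10 u (m00 a b)"
    and h3: "\<And>a b c e. hoch_delta3 m00 m01 m10 m3 a b c e = 0"
    and n0: "\<And>a b. m00 (N0 a) (N0 b) = N0 (nij_prod m00 N0 a b)"
    and n1: "\<And>a u. m01 (N0 a) (N1 u) = N1 (m01 (N0 a) u + m01 a (N1 u) - N1 (m01 a u))"
    and n2: "\<And>a u. m10 (N1 u) (N0 a) = N1 (m10 (N1 u) a + m10 u (N0 a) - N1 (m10 u a))"
    and c: "\<And>a b c. d_NNM2 m00 N0 m01 m10 N1 N2 a b c - partial_NNM3 N0 N1 m3 a b c = 0"
    unfolding Nijenhuis_algebra_def Nijenhuis_bimodule_def NAlg_3cocycle_def by auto
  note z = bil0[OF b00] bil0[OF b01] bil0[OF b10] tril0[OF t3] bil0[OF bN2] lin0[OF lN0]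
  have l0: "Vector_Spaces.linear sM sA (\<lambda>_. 0)" by (rule linzero[OF vM vA])
  have A: "two_term_Ainf sA sM (\<lambda>_. 0) m00 m01 m10 m3"
    unfolding two_term_Ainf_def
    using l0 b00 b01 b10 t3 h3 unfolding hoch_delta3_def by (simp add: z as l1 l2 l3)
  have B: "homotopy_Nijenhuis_op sA sM (\<lambda>_. 0) m00 m01 m10 m3 N0 N1 N2"
    unfolding homotopy_Nijenhuis_op_def
  proof (intro conjI allI)
    fix a b c
    show "N0 (nij_prod m00 N0 a b) - m00 (N0 a) (N0 b) = 0" by (simp add: n0)
    show "m01 (N0 a) (N2 b c) - m10 (N2 a b) (N0 c) - N2 (nij_prod m00 N0 a b) c +
        N2 a (nij_prod m00 N0 b c) - N1 (m01 a (N2 b c) - N2 (m00 a b) c + N2 a (m00 b c) - m10 (N2 a b) c) =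
        m3 (N0 a) (N0 b) (N0 c) - N1 (m3 (N0 a) (N0 b) c) - N1 (m3 (N0 a) b (N0 c)) -
        N1 (m3 a (N0 b) (N0 c)) + (N1 ^^ 2) (m3 (N0 a) b c) + (N1 ^^ 2) (m3 a (N0 b) c) +
        (N1 ^^ 2) (m3 a b (N0 c)) - (N1 ^^ 3) (m3 a b c)"
      using c[of a b c] unfolding d_NNM2_def hoch_delta2_def partial_expl
      by (simp add: eq_iff_diff_eq_0[symmetric])
  qed (use lN0 lN1 bN2 n1 n2 z in auto)
  show "skeletal_2term_hNA sA sM m00 m01 m10 m3 N0 N1 N2"
    unfolding skeletal_2term_hNA_def using A B by blast
qed

theorem theorem6p4:
  fixes sA :: "'k::field_char_0 \<Rightarrow> 'a::ab_group_add \<Rightarrow> 'a"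
    and sM :: "'k \<Rightarrow> 'm::ab_group_add \<Rightarrow> 'm"
  assumes "Vector_Spaces.vector_space sA" and "Vector_Spaces.vector_space sM"
  shows "bij_betw
    (\<lambda>(m00, m01, m10, m3, N0, N1, N2). ((m00, N0), ((m01, m10, N1), (m3, N2))))
    {(m00, m01, m10, m3, N0, N1, N2). skeletal_2term_hNA sA sM m00 m01 m10 m3 N0 N1 N2}
    {((m, N), ((l, r, NM), (chi, F))).
       Nijenhuis_algebra sA m N \<and> Nijenhuis_bimodule sA sM m N l r NM \<and>
       NAlg_3cocycle sA sM m N l r NM chi F}"
  unfolding bij_betw_def
proof
  show "inj_on (\<lambda>(m00, m01, m10, m3, N0, N1, N2). ((m00, N0), ((m01, m10, N1), (m3, N2))))
    {(m00, m01, m10, m3, N0, N1, N2). skeletal_2term_hNA sA sM m00 m01 m10 m3 N0 N1 N2}"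
    by (auto simp: inj_on_def)
  show "(\<lambda>(m00, m01, m10, m3, N0, N1, N2). ((m00, N0), ((m01, m10, N1), (m3, N2)))) `
    {(m00, m01, m10, m3, N0, N1, N2). skeletal_2term_hNA sA sM m00 m01 m10 m3 N0 N1 N2} =
    {((m, N), ((l, r, NM), (chi, F))).
       Nijenhuis_algebra sA m N \<and> Nijenhuis_bimodule sA sM m N l r NM \<and>
       NAlg_3cocycle sA sM m N l r NM chi F}"
  proof (rule set_eqI, rule iffI)
    fix x assume "x \<in> (\<lambda>(m00, m01, m10, m3, N0, N1, N2). ((m00, N0), ((m01, m10, N1), (m3, N2)))) `
      {(m00, m01, m10, m3, N0, N1, N2). skeletal_2term_hNA sA sM m00 m01 m10 m3 N0 N1 N2}"
    then show "x \<in> {((m, N), ((l, r, NM), (chi, F))).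
       Nijenhuis_algebra sA m N \<and> Nijenhuis_bimodule sA sM m N l r NM \<and>
       NAlg_3cocycle sA sM m N l r NM chi F}"
      using equiv[OF assms] by auto
  next
    fix x assume "x \<in> {((m, N), ((l, r, NM), (chi, F))).
       Nijenhuis_algebra sA m N \<and> Nijenhuis_bimodule sA sM m N l r NM \<and>
       NAlg_3cocycle sA sM m N l r NM chi F}"
    then obtain m N l r NM chi F where x: "x = ((m, N), ((l, r, NM), (chi, F)))"
      and h: "Nijenhuis_algebra sA m N \<and> Nijenhuis_bimodule sA sM m N l r NM \<and>
       NAlg_3cocycle sA sM m N l r NM chi F" by auto
    have "(m, l, r, chi, N, NM, F) \<in>
      {(m00, m01, m10, m3, N0, N1, N2). skeletal_2term_hNA sA sM m00 m01 m10 m3 N0 N1 N2}"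
      using equiv[OF assms] h by auto
    then show "x \<in> (\<lambda>(m00, m01, m10, m3, N0, N1, N2). ((m00, N0), ((m01, m10, N1), (m3, N2)))) `
      {(m00, m01, m10, m3, N0, N1, N2). skeletal_2term_hNA sA sM m00 m01 m10 m3 N0 N1 N2}"
      unfolding x by (rule rev_image_eqI) simp
  qed
qed

end
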